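(* Let $f(v)=\frac12|v-1|$ (Total Variation), so $f^*(u)=u$ with $\mathrm{dom}(f^* )=[-\frac12,\frac12]$. In the binary noisy-label setting described in the context, $\mathrm{Bias}_f(h,g)$ is constant (in $h$ and $g$), and for any hypothesis space $\mathcal H$, $D_f(P_{h\times Y}\|Q_{h\times Y})$ is $\mathcal H$-robust with label noise.
   Context: $(X,Y)$ with $X\in\mathcal X$, $Y\in\{-1,+1\}$; noisy label $\tilde Y$ generated from $Y$, conditionally independently of $X$ given $Y$, with $e_+={\mathbb P}(\tilde Y=-1\mid Y=+1)$, $e_-={\mathbb P}(\tilde Y=+1\mid Y=-1)$, $e_++e_-<1$. A hypothesis space $\mathcal H$ is a set of classifiers $h:\mathcal X\to\{-1,+1\}$. $P_{h\times Y}(y,y')={\mathbb P}(h(X)=y,Y=y')$, $Q_{h\times Y}(y,y')={\mathbb P}(h(X)=y){\mathbb P}(Y=y')$, and $\tilde P_{h\times\tilde Y},\tilde Q_{h\times\tilde Y}$ the same with $\tilde Y$. $D_f(P\|Q)=\sum_z q(z)f(p(z)/q(z))$. For $g:\{-1,+1\}^2\to\mathrm{dom}(f^* )$, $\Delta^y_f(h,g)=\mathbb E_X[g(h(X),y)]-\mathbb E_X[f^*(g(h(X),y))]$ and $\mathrm{Bias}_f(h,g)=e_+\Delta^{-1}_f(h,g)+e_-\Delta^{+1}_f(h,g)$. With $h^*_f\in\arg\max_{h\in\mathcal H}D_f(P_{h\times Y}\|Q_{h\times Y})$, $D_f$ is $\mathcal H$-robust if $h^*_f=\arg\max_{h\in\mathcal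 H}D_f(\tilde P_{h\times\tilde Y}\|\tilde Q_{h\times\tilde Y})$. *)

theory Defs
  imports "HOL-Probability.Probability"
begin

definition labels :: "int set" where
  "labels = {-1, 1}"

definition fdiv :: "(real \<Rightarrow> real) \<Rightarrow> (int \<times> int \<Rightarrow> real) \<Rightarrow> (int \<times> int \<Rightarrow> real) \<Rightarrow> real" where
  "fdiv f p q = (\<Sum>z\<in>labels \<times> labels. q z * f (p z / q z))"

definition conj_fun :: "(real \<Rightarrow> real) \<Rightarrow> real \<Rightarrow> real" where
  "conj_fun f u = (SUP v. u * v - f v)"

definition f_TV :: "real \<Rightarrow> real" where
  "f_TV v = \<bar>v - 1\<bar> / 2"

definition Pjoint :: "'w measure \<Rightarrow> ('w \<Rightarrow> 'x) \<Rightarrow> ('w \<Rightarrow> int) \<Rightarrow> ('x \<Rightarrow> int) \<Rightarrow> int \<times> int \<Rightarrow> real" where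
  "Pjoint M X Y h z = measure M {w \<in> space M. h (X w) = fst z \<and> Y w = snd z}"

definition Qprod :: "'w measure \<Rightarrow> ('w \<Rightarrow> 'x) \<Rightarrow> ('w \<Rightarrow> int) \<Rightarrow> ('x \<Rightarrow> int) \<Rightarrow> int \<times> int \<Rightarrow> real" where
  "Qprod M X Y h z = measure M {w \<in> space M. h (X w) = fst z} * measure M {w \<in> space M. Y w = snd z}"

definition cond_label :: "'w measure \<Rightarrow> ('w \<Rightarrow> int) \<Rightarrow> ('w \<Rightarrow> int) \<Rightarrow> int \<Rightarrow> int \<Rightarrow> real" where
  "cond_label M Y Yt a b = measure M {w \<in> space M. Yt w = a \<and> Y w = b} / measure M {w \<in> space M. Y w = b}"

definition e_plus where "e_plus M Y Yt = cond_label M Y Yt (-1) 1"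
definition e_minus where "e_minus M Y Yt = cond_label M Y Yt 1 (-1)"

definition Delta_f :: "(real \<Rightarrow> real) \<Rightarrow> 'w measure \<Rightarrow> ('w \<Rightarrow> 'x) \<Rightarrow> int \<Rightarrow> ('x \<Rightarrow> int) \<Rightarrow> (int \<Rightarrow> int \<Rightarrow> real) \<Rightarrow> real" where
  "Delta_f f M X y h g =
     (\<integral>w. g (h (X w)) y \<partial>M) - (\<integral>w. conj_fun f (g (h (X w)) y) \<partial>M)"

definition Bias_f where
  "Bias_f f M X Y Yt h g =
     e_plus M Y Yt * Delta_f f M X (-1) h g + e_minus M Y Yt * Delta_f f M X 1 h g"

definition argmax_on :: "('a \<Rightarrow> real) \<Rightarrow> 'a set \<Rightarrow> 'a set" where
  "argmax_on F H = {h \<in> H. \<forall>h'\<in>H. F h' \<le> F h}"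

definition H_robust where
  "H_robust f M X Y Yt H \<longleftrightarrow>
     argmax_on (\<lambda>h. fdiv f (Pjoint M X Y h) (Qprod M X Y h)) H =
     argmax_on (\<lambda>h. fdiv f (Pjoint M X Yt h) (Qprod M X Yt h)) H"

definition classifier :: "'x measure \<Rightarrow> ('x \<Rightarrow> int) \<Rightarrow> bool" where
  "classifier N h \<longleftrightarrow> h \<in> measurable N (count_space UNIV) \<and> (\<forall>x\<in>space N. h x \<in> labels)"

end

theory Submission
  imports Defs
begin

lemma eqset:
  assumes "U \<in> measurable M (count_space UNIV)"
  shows "{w\<in>space M. U w = (c::int)} \<in> sets M"
proof -
  have "{w\<in>space M. U w = c} = U -` {c} \<inter> space M" by auto
  then show ?thesis using measurable_sets[OF assms, of "{c}"] by simp
qed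

lemma split2:
  assumes pM: "prob_space M" and V: "V \<in> measurable M (count_space UNIV)"
    and Vl: "\<forall>w\<in>space M. V w \<in> labels"
    and S: "{w\<in>space M. P w} \<in> sets M"
    and i1: "\<forall>w\<in>space M. P1 w \<longleftrightarrow> P w \<and> V w = 1"
    and i2: "\<forall>w\<in>space M. P2 w \<longleftrightarrow> P w \<and> V w = -1"
  shows "measure M {w\<in>space M. P w} = measure M {w\<in>space M. P1 w} + measure M {w\<in>space M. P2 w}"
proof -
  interpret prob_space M by fact
  have e1: "{w\<in>space M. P1 w} = {w\<in>space M. P w} \<inter> {w\<in>space M. V w = 1}" using i1 by auto
  have e2: "{w\<in>space M. P2 w} = {w\<in>space M. P w} \<inter> {w\<in>space M. V w = -1}" using i2 by auto
  have s1: "{w\<in>space M. P1 w} \<in> sets M" unfolding e1 using S eqset[OF V] by blast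
  have s2: "{w\<in>space M. P2 w} \<in> sets M" unfolding e2 using S eqset[OF V] by blast
  have u: "{w\<in>space M. P w} = {w\<in>space M. P1 w} \<union> {w\<in>space M. P2 w}"
    using i1 i2 Vl by (auto simp: labels_def)
  have d: "{w\<in>space M. P1 w} \<inter> {w\<in>space M. P2 w} = {}" using i1 i2 by auto
  show ?thesis unfolding u by (rule finite_measure_Union[OF s1 s2 d])
qed

lemma tv_term:
  fixes p q :: real
  assumes "0 \<le> q" "q = 0 \<Longrightarrow> p = 0"
  shows "q * f_TV (p / q) = \<bar>p - q\<bar> / 2"
proof (cases "q = 0")
  case True then show ?thesis using assms by (simp add: f_TV_def)
next
  case False
  then have "q * \<bar>p / q - 1\<bar> = \<bar>q * (p / q - 1)\<bar>" using assms by (simp add: abs_mult)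
  also have "\<dots> = \<bar>p - q\<bar>" using False by (simp add: algebra_simps)
  finally show ?thesis by (simp add: f_TV_def)
qed

lemma zero_aux:
  fixes a b c :: real
  assumes "0 \<le> a" "0 \<le> b" "0 \<le> c" "(a + b) * (a + c) = 0"
  shows "a = 0"
  using assms by (auto simp: mult_eq_0_iff)

lemma tv_binary:
  assumes pM: "prob_space M"
    and U: "U \<in> measurable M (count_space UNIV)" and Ul: "\<forall>w\<in>space M. U w \<in> labels"
    and V: "V \<in> measurable M (count_space UNIV)" and Vl: "\<forall>w\<in>space M. V w \<in> labels"
  shows "fdiv f_TV (\<lambda>z. measure M {w\<in>space M. U w = fst z \<and> V w = snd z})
            (\<lambda>z. measure M {w\<in>space M. U w = fst z} * measure M {w\<in>space M. V w = snd z})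
       = 2 * \<bar>measure M {w\<in>space M. U w = 1 \<and> V w = 1} - measure M {w\<in>space M. U w = 1} * measure M {w\<in>space M. V w = 1}\<bar>"
proof -
  interpret prob_space M by fact
  define p11 where "p11 = measure M {w\<in>space M. U w = 1 \<and> V w = 1}"
  define p1m where "p1m = measure M {w\<in>space M. U w = 1 \<and> V w = -1}"
  define pm1 where "pm1 = measure M {w\<in>space M. U w = -1 \<and> V w = 1}"
  define pmm where "pmm = measure M {w\<in>space M. U w = -1 \<and> V w = -1}"
  have SU: "\<And>c. {w\<in>space M. U w = c} \<in> sets M" using eqset[OF U] by blast
  have SV: "\<And>c. {w\<in>space M. V w = c} \<in> sets M" using eqset[OF V] by blast
  have u1: "measure M {w\<in>space M. U w = 1} = p11 + p1m" unfolding p11_def p1m_def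
    by (rule split2[OF pM V Vl SU]) auto
  have um: "measure M {w\<in>space M. U w = -1} = pm1 + pmm" unfolding pm1_def pmm_def
    by (rule split2[OF pM V Vl SU]) auto
  have v1: "measure M {w\<in>space M. V w = 1} = p11 + pm1" unfolding p11_def pm1_def
    by (rule split2[OF pM U Ul SV]) auto
  have vm: "measure M {w\<in>space M. V w = -1} = p1m + pmm" unfolding p1m_def pmm_def
    by (rule split2[OF pM U Ul SV]) auto
  have "measure M {w\<in>space M. True} = measure M {w\<in>space M. U w = 1} + measure M {w\<in>space M. U w = -1}"
    by (rule split2[OF pM U Ul]) auto
  then have tot: "p11 + p1m + pm1 + pmm = 1" using u1 um prob_space by simp
  have n: "0 \<le> p11" "0 \<le> p1m" "0 \<le> pm1" "0 \<le> pmm" unfolding p11_def p1m_def pm1_def pmm_def by auto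
  have LL: "labels \<times> labels = {(-1,-1),(-1,1),(1,-1),(1,1)}" by (auto simp: labels_def)
  have "fdiv f_TV (\<lambda>z. measure M {w\<in>space M. U w = fst z \<and> V w = snd z})
            (\<lambda>z. measure M {w\<in>space M. U w = fst z} * measure M {w\<in>space M. V w = snd z})
      = (pm1 + pmm) * (p1m + pmm) * f_TV (pmm / ((pm1 + pmm) * (p1m + pmm)))
      + (pm1 + pmm) * (p11 + pm1) * f_TV (pm1 / ((pm1 + pmm) * (p11 + pm1)))
      + (p11 + p1m) * (p1m + pmm) * f_TV (p1m / ((p11 + p1m) * (p1m + pmm)))
      + (p11 + p1m) * (p11 + pm1) * f_TV (p11 / ((p11 + p1m) * (p11 + pm1)))"
    unfolding fdiv_def LL using u1 um v1 vm
    by (simp add: p11_def p1m_def pm1_def pmm_def)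
  also have "\<dots> = \<bar>pmm - (pm1 + pmm) * (p1m + pmm)\<bar>/2 + \<bar>pm1 - (pm1 + pmm) * (p11 + pm1)\<bar>/2
      + \<bar>p1m - (p11 + p1m) * (p1m + pmm)\<bar>/2 + \<bar>p11 - (p11 + p1m) * (p11 + pm1)\<bar>/2"
    using n zero_aux[of pmm pm1 p1m] zero_aux[of pm1 pmm p11] zero_aux[of p1m p11 pmm] zero_aux[of p11 p1m pm1]
      tv_term[of "(pm1 + pmm) * (p1m + pmm)" pmm] tv_term[of "(pm1 + pmm) * (p11 + pm1)" pm1]
      tv_term[of "(p11 + p1m) * (p1m + pmm)" p1m] tv_term[of "(p11 + p1m) * (p11 + pm1)" p11]
    by (simp add: ac_simps)
  also have "\<dots> = 2 * \<bar>p11 - (p11 + p1m) * (p11 + pm1)\<bar>"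
  proof -
    have pmm: "pmm = 1 - p11 - p1m - pm1" using tot by simp
    have a: "pmm - (pm1 + pmm) * (p1m + pmm) = p11 - (p11 + p1m) * (p11 + pm1)"
      unfolding pmm by (simp add: algebra_simps)
    have b: "pm1 - (pm1 + pmm) * (p11 + pm1) = - (p11 - (p11 + p1m) * (p11 + pm1))"
      unfolding pmm by (simp add: algebra_simps)
    have c: "p1m - (p11 + p1m) * (p1m + pmm) = - (p11 - (p11 + p1m) * (p11 + pm1))"
      unfolding pmm by (simp add: algebra_simps)
    show ?thesis unfolding a b c by simp
  qed
  finally show ?thesis using u1 v1 by (simp add: p11_def)
qed

lemma conj_TV:
  assumes "\<bar>u\<bar> \<le> 1/2"
  shows "conj_fun f_TV u = u"
proof -
  have le: "u * v - f_TV v \<le> u" for v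
  proof -
    have "u * (v - 1) \<le> \<bar>u\<bar> * \<bar>v - 1\<bar>" by (metis abs_ge_self abs_mult)
    also have "\<dots> \<le> 1/2 * \<bar>v - 1\<bar>" using assms by (intro mult_right_mono) auto
    finally show ?thesis by (simp add: f_TV_def algebra_simps)
  qed
  have "(SUP v. u * v - f_TV v) = u"
  proof (rule antisym)
    show "(SUP v. u * v - f_TV v) \<le> u" by (rule cSUP_least) (auto intro: le)
    have "bdd_above (range (\<lambda>v. u * v - f_TV v))" by (rule bdd_aboveI[where M=u]) (auto intro: le)
    then have "u * 1 - f_TV 1 \<le> (SUP v. u * v - f_TV v)" by (rule cSUP_upper[rotated]) auto
    then show "u \<le> (SUP v. u * v - f_TV v)" by (simp add: f_TV_def)
  qed
  then show ?thesis by (simp add: conj_fun_def)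
qed

lemma argmax_scale:
  assumes "k > 0" "\<forall>h\<in>H. G h = k * F h"
  shows "argmax_on F H = argmax_on G H"
  using assms by (auto simp: argmax_on_def)

theorem theorem7:
  fixes M :: "'w measure" and N :: "'x measure"
    and X :: "'w \<Rightarrow> 'x" and Y Yt :: "'w \<Rightarrow> int"
  assumes "prob_space M"
    and "X \<in> measurable M N"
    and "Y \<in> measurable M (count_space UNIV)" and "\<forall>w\<in>space M. Y w \<in> labels"
    and "Yt \<in> measurable M (count_space UNIV)" and "\<forall>w\<in>space M. Yt w \<in> labels"
    and noise: "\<forall>A\<in>sets N. \<forall>y y'.
        measure M {w \<in> space M. X w \<in> A \<and> Y w = y \<and> Yt w = y'} * measure M {w \<in> space M. Y w = y}
      = measure M {w \<in> space M. X w \<in> A \<and> Y w = y} * measure M {w \<in> space M. Y w = y \<and> Yt w = y'}"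
    and "e_plus M Y Yt + e_minus M Y Yt < 1"
  shows "(\<exists>c. \<forall>h g. classifier N h \<and> (\<forall>a\<in>labels. \<forall>b\<in>labels. g a b \<in> {-1/2..1/2})
              \<longrightarrow> Bias_f f_TV M X Y Yt h g = c)
       \<and> (\<forall>H. (\<forall>h\<in>H. classifier N h) \<longrightarrow> H_robust f_TV M X Y Yt H)"
proof
  note pM = assms(1) and Xm = assms(2) and Ym = assms(3) and Yl = assms(4)
    and Ytm = assms(5) and Ytl = assms(6) and ek = assms(8)
  interpret prob_space M by fact
  show "\<exists>c. \<forall>h g. classifier N h \<and> (\<forall>a\<in>labels. \<forall>b\<in>labels. g a b \<in> {-1/2..1/2})
              \<longrightarrow> Bias_f f_TV M X Y Yt h g = c"
  proof (intro exI allI impI)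
    fix h and g :: "int \<Rightarrow> int \<Rightarrow> real" assume hg: "classifier N h \<and> (\<forall>a\<in>labels. \<forall>b\<in>labels. g a b \<in> {-1/2..1/2})"
    have D: "Delta_f f_TV M X y h g = 0" if y: "y \<in> labels" for y
    proof -
      have "(\<integral>w. conj_fun f_TV (g (h (X w)) y) \<partial>M) = (\<integral>w. g (h (X w)) y \<partial>M)"
      proof (rule Bochner_Integration.integral_cong)
        fix w assume w: "w \<in> space M"
        have "X w \<in> space N" by (rule measurable_space[OF Xm w])
        then have "h (X w) \<in> labels" using hg by (auto simp: classifier_def)
        then have "g (h (X w)) y \<in> {-1/2..1/2}" using hg y by blast
        then show "conj_fun f_TV (g (h (X w)) y) = g (h (X w)) y" by (intro conj_TV) auto
      qed simp
      then show ?thesis by (simp add: Delta_f_def)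
    qed
    show "Bias_f f_TV M X Y Yt h g = 0"
      unfolding Bias_f_def using D[of 1] D[of "-1"] by (simp add: labels_def)
  qed
  show "\<forall>H. (\<forall>h\<in>H. classifier N h) \<longrightarrow> H_robust f_TV M X Y Yt H"
  proof (intro allI impI)
    fix H assume HH: "\<forall>h\<in>H. classifier N h"
    define k where "k = 1 - e_plus M Y Yt - e_minus M Y Yt"
    have kpos: "k > 0" using ek by (simp add: k_def)
    have key: "fdiv f_TV (Pjoint M X Yt h) (Qprod M X Yt h) = k * fdiv f_TV (Pjoint M X Y h) (Qprod M X Y h)"
      if hc: "classifier N h" for h
    proof -
      define U where "U = (\<lambda>w. h (X w))"
      have hm: "h \<in> measurable N (count_space UNIV)" using hc by (simp add: classifier_def)
      have Um: "U \<in> measurable M (count_space UNIV)" unfolding U_def by (rule measurable_compose[OF Xm hm])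
      have Ul: "\<forall>w\<in>space M. U w \<in> labels"
        using hc measurable_space[OF Xm] by (auto simp: classifier_def U_def)
      have PY: "\<And>Z. Pjoint M X Z h = (\<lambda>z. measure M {w\<in>space M. U w = fst z \<and> Z w = snd z})"
        by (simp add: fun_eq_iff Pjoint_def U_def)
      have QY: "\<And>Z. Qprod M X Z h = (\<lambda>z. measure M {w\<in>space M. U w = fst z} * measure M {w\<in>space M. Z w = snd z})"
        by (simp add: fun_eq_iff Qprod_def U_def)
      have SU: "\<And>c. {w\<in>space M. U w = c} \<in> sets M" using eqset[OF Um] by blast
      have SY: "\<And>c. {w\<in>space M. Y w = c} \<in> sets M" using eqset[OF Ym] by blast
      have SYt: "\<And>c. {w\<in>space M. Yt w = c} \<in> sets M" using eqset[OF Ytm] by blast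
      have SUYt: "{w\<in>space M. U w = 1 \<and> Yt w = 1} \<in> sets M"
        by (rule sets.sets_Collect_conj[OF SYt SU])
      define a where "a = measure M {w\<in>space M. U w = 1 \<and> Y w = 1}"
      define b where "b = measure M {w\<in>space M. U w = 1 \<and> Y w = -1}"
      define y1 where "y1 = measure M {w\<in>space M. Y w = 1}"
      define ym where "ym = measure M {w\<in>space M. Y w = -1}"
      define s11 where "s11 = measure M {w\<in>space M. Y w = 1 \<and> Yt w = 1}"
      define s1m where "s1m = measure M {w\<in>space M. Y w = 1 \<and> Yt w = -1}"
      define sm1 where "sm1 = measure M {w\<in>space M. Y w = -1 \<and> Yt w = 1}"
      define smm where "smm = measure M {w\<in>space M. Y w = -1 \<and> Yt w = -1}"
      define r1 where "r1 = measure M {w\<in>space M. U w = 1 \<and> Y w = 1 \<and> Yt w = 1}"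
      define r1' where "r1' = measure M {w\<in>space M. U w = 1 \<and> Y w = 1 \<and> Yt w = -1}"
      define rm where "rm = measure M {w\<in>space M. U w = 1 \<and> Y w = -1 \<and> Yt w = 1}"
      define rm' where "rm' = measure M {w\<in>space M. U w = 1 \<and> Y w = -1 \<and> Yt w = -1}"
      define c1 where "c1 = measure M {w\<in>space M. U w = -1 \<and> Y w = 1}"
      define cm where "cm = measure M {w\<in>space M. U w = -1 \<and> Y w = -1}"
      define mU where "mU = measure M {w\<in>space M. U w = 1}"
      define t1 where "t1 = measure M {w\<in>space M. U w = 1 \<and> Yt w = 1}"
      define z1 where "z1 = measure M {w\<in>space M. Yt w = 1}"
      have nn: "0 \<le> a" "0 \<le> b" "0 \<le> y1" "0 \<le> ym" "0 \<le> s11" "0 \<le> s1m" "0 \<le> sm1" "0 \<le> smm"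
        "0 \<le> r1" "0 \<le> r1'" "0 \<le> rm" "0 \<le> rm'" "0 \<le> c1" "0 \<le> cm"
        by (auto simp: a_def b_def y1_def ym_def s11_def s1m_def sm1_def smm_def r1_def r1'_def rm_def rm'_def c1_def cm_def)
      have e1: "mU = a + b" unfolding mU_def a_def b_def by (rule split2[OF pM Ym Yl SU]) auto
      have "measure M {w\<in>space M. True} = y1 + ym" unfolding y1_def ym_def
        by (rule split2[OF pM Ym Yl]) auto
      then have e2: "y1 + ym = 1" using prob_space by simp
      have e3: "y1 = s11 + s1m" unfolding y1_def s11_def s1m_def by (rule split2[OF pM Ytm Ytl SY]) auto
      have e3': "ym = sm1 + smm" unfolding ym_def sm1_def smm_def by (rule split2[OF pM Ytm Ytl SY]) auto
      have e4: "t1 = r1 + rm" unfolding t1_def r1_def rm_def by (rule split2[OF pM Ym Yl SUYt]) auto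
      have e5: "z1 = s11 + sm1" unfolding z1_def s11_def sm1_def by (rule split2[OF pM Ym Yl SYt]) auto
      have e6: "y1 = a + c1" unfolding y1_def a_def c1_def by (rule split2[OF pM Um Ul SY]) auto
      have e6': "ym = b + cm" unfolding ym_def b_def cm_def by (rule split2[OF pM Um Ul SY]) auto
      have e7: "a = r1 + r1'" unfolding a_def r1_def r1'_def
        by (rule split2[OF pM Ytm Ytl sets.sets_Collect_conj[OF SY SU]]) auto
      have e7': "b = rm + rm'" unfolding b_def rm_def rm'_def
        by (rule split2[OF pM Ytm Ytl sets.sets_Collect_conj[OF SY SU]]) auto
      have A: "{x\<in>space N. h x = 1} \<in> sets N" using eqset[OF hm] by blast
      have XA: "\<And>P. {w\<in>space M. X w \<in> {x\<in>space N. h x = 1} \<and> P w} = {w\<in>space M. U w = 1 \<and> P w}"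
        using measurable_space[OF Xm] by (auto simp: U_def)
      have nz: "\<And>y y'. measure M {w\<in>space M. U w = 1 \<and> Y w = y \<and> Yt w = y'} * measure M {w \<in> space M. Y w = y}
          = measure M {w\<in>space M. U w = 1 \<and> Y w = y} * measure M {w \<in> space M. Y w = y \<and> Yt w = y'}"
        using noise[rule_format, OF A] unfolding XA .
      have n1: "r1 * y1 = a * s11" using nz[of 1 1] by (simp add: r1_def y1_def a_def s11_def)
      have n2: "rm * ym = b * sm1" using nz[of "-1" 1] by (simp add: rm_def ym_def b_def sm1_def)
      have ep: "e_plus M Y Yt = s1m / y1"
        unfolding e_plus_def cond_label_def s1m_def y1_def by (simp add: conj_commute)
      have em: "e_minus M Y Yt = sm1 / ym"
        unfolding e_minus_def cond_label_def sm1_def ym_def by (simp add: conj_commute)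
      have delta: "t1 - mU * z1 = k * (a - mU * y1)"
      proof (cases "y1 = 0")
        case True
        then have "a = 0" "s11 = 0" "s1m = 0" "r1 = 0" "ym = 1" using nn e3 e6 e7 e2 by linarith+
        then show ?thesis using n2 e1 e4 e5 True by (simp add: algebra_simps)
      next
        case y1: False
        show ?thesis
        proof (cases "ym = 0")
          case True
          then have "b = 0" "sm1 = 0" "rm = 0" "y1 = 1" using nn e3' e6' e7' e2 by linarith+
          then show ?thesis using n1 e1 e4 e5 True by (simp add: algebra_simps)
        next
          case ym: False
          define E where "E = s1m / y1"
          define F where "F = sm1 / ym"
          have "s1m = E * y1" using y1 by (simp add: E_def)
          have sm1: "sm1 = F * ym" using ym by (simp add: F_def)
          have s11: "s11 = (1 - E) * y1" using y1 e3 by (simp add: E_def field_simps)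
          have r1: "r1 = a * (1 - E)" using n1 y1 s11
            by (metis mult.assoc mult.commute mult_right_cancel)
          have rm: "rm = b * F" using n2 ym sm1
            by (metis mult.assoc mult.commute mult_right_cancel)
          have kk: "k = 1 - E - F" by (simp add: k_def ep em E_def F_def)
          have ymv: "ym = 1 - y1" using e2 by simp
          show ?thesis unfolding kk e4 e1 e5 r1 rm s11 sm1 ymv by (simp add: algebra_simps)
        qed
      qed
      have "fdiv f_TV (Pjoint M X Yt h) (Qprod M X Yt h) = 2 * \<bar>t1 - mU * z1\<bar>"
        unfolding PY QY t1_def mU_def z1_def by (rule tv_binary[OF pM Um Ul Ytm Ytl])
      moreover have "fdiv f_TV (Pjoint M X Y h) (Qprod M X Y h) = 2 * \<bar>a - mU * y1\<bar>"
        unfolding PY QY a_def mU_def y1_def by (rule tv_binary[OF pM Um Ul Ym Yl])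
      ultimately show ?thesis using delta kpos by (simp add: abs_mult)
    qed
    show "H_robust f_TV M X Y Yt H"
      unfolding H_robust_def by (rule argmax_scale[OF kpos]) (use HH key in blast)
  qed
qed

end
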